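(* Let $n\in\mathbb{N}$, let $c=(c_{i,j})$ be an $n\times(n+1)$ matrix with entries in $\{0,1\}$, $\sigma_1,\ldots,\sigma_n>0$, $\gamma_1,\ldots,\gamma_{n+1}>0$ with $\sum_jc_{i,j}\gamma_j>0$ for each $i$. Let $\mathbf{X}=(X_1,\ldots,X_n)'$ have decumulative distribution function $\mathbf{P}[X_1>x_1,\ldots,X_n>x_n]=\prod_{j=1}^{n+1}(1+\sum_{i=1}^nc_{i,j}x_i/\sigma_i)^{-\gamma_j}$ for $(x_1,\ldots,x_n)'\in(0,\infty)^n$. Let $X_+=\max_iX_i$ and, for nonempty $\mathcal{S}\subseteq\{1,\ldots,n\}$, $X_{\mathcal{S}-}=\min_{s\in\mathcal{S}}X_s$ with decumulative distribution function $\overline{F}_{\mathcal{S}-}$. Then for $q\in[0,1)$, whenever $CTE_q[X_+]$ is finite, \[ CTE_q[X_+]=\frac{1}{1-q}\sum_{\emptyset\ne\mathcal{S}\subseteq\{1,\ldots,n\}}(-1)^{|\mathcal{S}|-1}\mathbf{E}\left[X_{\mathcal{S}-}\mid X_{\mathcal{S}-}>VaR_q[X_+]\right]\overline{F}_{\mathcal{S}-}(VaR_q[X_+]). \]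
   Context: $VaR_q[Y]=\inf\{x:\mathbf{P}[Y\le x]\ge q\}$ and $CTE_q[Y]=\mathbf{E}[Y\mid Y>VaR_q[Y]]$. *)

theory Defs
  imports "HOL-Probability.Probability"
begin

text \<open>Value-at-Risk: VaR_q[Y] = inf {x. P[Y <= x] >= q}, taken in the extended reals
  so that VaR_0[Y] = -infinity (infimum of all reals).\<close>
definition VaR :: "'a measure \<Rightarrow> ('a \<Rightarrow> real) \<Rightarrow> real \<Rightarrow> ereal" where
  "VaR M Y q = Inf (ereal ` {x::real. measure M {\<omega> \<in> space M. Y \<omega> \<le> x} \<ge> q})"

definition survival :: "'a measure \<Rightarrow> ('a \<Rightarrow> real) \<Rightarrow> ereal \<Rightarrow> real" where
  "survival M Y v = measure M {\<omega> \<in> space M. v < ereal (Y \<omega>)}"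

definition tail_cond_exp :: "'a measure \<Rightarrow> ('a \<Rightarrow> real) \<Rightarrow> ereal \<Rightarrow> real" where
  "tail_cond_exp M Y v =
     (LINT \<omega>:{\<omega> \<in> space M. v < ereal (Y \<omega>)}|M. Y \<omega>) / survival M Y v"

definition CTE :: "'a measure \<Rightarrow> ('a \<Rightarrow> real) \<Rightarrow> real \<Rightarrow> real" where
  "CTE M Y q = tail_cond_exp M Y (VaR M Y q)"

end

theory Submission
  imports Defs
begin

lemma max_min_ie:
  fixes b :: "nat \<Rightarrow> real"
  assumes "finite I" "I \<noteq> {}"
  shows "Max (b ` I) = (\<Sum>S\<in>{S. S \<subseteq> I \<and> S \<noteq> {}}. (-1) ^ (card S - 1) * Min (b ` S))"
  using assms
proof (induction I arbitrary: b rule: finite_ne_induct)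
  case (singleton x)
  have "{S. S \<subseteq> {x} \<and> S \<noteq> {}} = {{x}}" by auto
  then show ?case by simp
next
  case (insert x F)
  have split: "{S. S \<subseteq> insert x F \<and> S \<noteq> {}} = {S. S \<subseteq> F \<and> S \<noteq> {}} \<union> insert x ` {T. T \<subseteq> F}"
  proof (intro equalityI subsetI)
    fix S assume S: "S \<in> {S. S \<subseteq> insert x F \<and> S \<noteq> {}}"
    show "S \<in> {S. S \<subseteq> F \<and> S \<noteq> {}} \<union> insert x ` {T. T \<subseteq> F}"
    proof (cases "x \<in> S")
      case True
      then have "S = insert x (S - {x})" by auto
      moreover have "S - {x} \<subseteq> F" using S by auto
      ultimately show ?thesis by blast
    next
      case False
      then show ?thesis using S by auto
    qed
  qed auto
  have disj: "{S. S \<subseteq> F \<and> S \<noteq> {}} \<inter> insert x ` {T. T \<subseteq> F} = {}"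
    using insert.hyps by auto
  have fin1: "finite {S. S \<subseteq> F \<and> S \<noteq> {}}" using insert.hyps by simp
  have fin2: "finite (insert x ` {T. T \<subseteq> F})" using insert.hyps by simp
  have inj: "inj_on (insert x) {T. T \<subseteq> F}"
  proof (rule inj_onI)
    fix A B assume A: "A \<in> {T. T \<subseteq> F}" and B: "B \<in> {T. T \<subseteq> F}" and e: "insert x A = insert x B"
    have "x \<notin> A" "x \<notin> B" using A B insert.hyps by auto
    then have "A = insert x A - {x}" "B = insert x B - {x}" by auto
    then show "A = B" using e by simp
  qed
  have PF: "{T. T \<subseteq> F} = insert {} {T. T \<subseteq> F \<and> T \<noteq> {}}" by auto
  let ?b' = "\<lambda>i. min (b x) (b i)"
  have ih: "Max (?b' ` F) = (\<Sum>S\<in>{S. S \<subseteq> F \<and> S \<noteq> {}}. (-1) ^ (card S - 1) * Min (?b' ` S))"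
    by (rule insert.IH)
  have ih0: "Max (b ` F) = (\<Sum>S\<in>{S. S \<subseteq> F \<and> S \<noteq> {}}. (-1) ^ (card S - 1) * Min (b ` S))"
    by (rule insert.IH)
  have mono: "mono (min (b x))" by (rule monoI) (auto simp: min_def)
  have MaxF: "Max (?b' ` F) = min (b x) (Max (b ` F))"
    using mono_Max_commute[OF mono, of "b ` F"] insert.hyps by (simp add: image_image)
  have trm: "(-1) ^ (card (insert x T) - 1) * Min (b ` insert x T) = - ((-1) ^ (card T - 1) * Min (?b' ` T))"
    if "T \<subseteq> F" "T \<noteq> {}" for T
  proof -
    have fT: "finite T" using that insert.hyps finite_subset by blast
    have xT: "x \<notin> T" using that insert.hyps by auto
    have c: "card (insert x T) - 1 = Suc (card T - 1)" proof -
      have "card (insert x T) = Suc (card T)" using fT xT by simp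
      moreover have "card T > 0" using fT that(2) by auto
      ultimately show ?thesis by simp
    qed
    have m1: "Min (b ` insert x T) = min (b x) (Min (b ` T))" using fT that by simp
    have m2: "Min (?b' ` T) = min (b x) (Min (b ` T))"
      using mono_Min_commute[OF mono, of "b ` T"] fT that by (simp add: image_image)
    show ?thesis using c m1 m2 by simp
  qed
  have "(\<Sum>S\<in>{S. S \<subseteq> insert x F \<and> S \<noteq> {}}. (-1) ^ (card S - 1) * Min (b ` S))
     = (\<Sum>S\<in>{S. S \<subseteq> F \<and> S \<noteq> {}}. (-1) ^ (card S - 1) * Min (b ` S))
       + (\<Sum>T\<in>{T. T \<subseteq> F}. (-1) ^ (card (insert x T) - 1) * Min (b ` insert x T))"
    unfolding split sum.union_disjoint[OF fin1 fin2 disj] sum.reindex[OF inj] comp_def by (rule refl)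
  also have "(\<Sum>T\<in>{T. T \<subseteq> F}. (-1) ^ (card (insert x T) - 1) * Min (b ` insert x T))
     = b x + (\<Sum>T\<in>{T. T \<subseteq> F \<and> T \<noteq> {}}. (-1) ^ (card (insert x T) - 1) * Min (b ` insert x T))"
    unfolding PF using fin1 by (subst sum.insert) auto
  also have "(\<Sum>T\<in>{T. T \<subseteq> F \<and> T \<noteq> {}}. (-1) ^ (card (insert x T) - 1) * Min (b ` insert x T))
     = - Max (?b' ` F)"
    unfolding ih sum_negf[symmetric]
  proof (rule sum.cong[OF refl])
    fix T assume "T \<in> {T. T \<subseteq> F \<and> T \<noteq> {}}"
    then show "(-1) ^ (card (insert x T) - 1) * Min (b ` insert x T) = - ((-1) ^ (card T - 1) * Min (?b' ` T))"
      using trm by blast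
  qed
  finally show ?case using ih0 MaxF insert.hyps by (simp add: max_def min_def)
qed


locale pp = prob_space M for M :: "'a measure" +
  fixes n :: nat and c :: "nat \<Rightarrow> nat \<Rightarrow> real"
    and \<sigma> :: "nat \<Rightarrow> real" and \<gamma> :: "nat \<Rightarrow> real"
    and X :: "nat \<Rightarrow> 'a \<Rightarrow> real"
  assumes c01: "\<And>i j. i \<in> {1..n} \<Longrightarrow> j \<in> {1..n+1} \<Longrightarrow> c i j \<in> {0, 1}"
    and sigma_pos: "\<And>i. i \<in> {1..n} \<Longrightarrow> \<sigma> i > 0"
    and meas: "\<And>i. i \<in> {1..n} \<Longrightarrow> X i \<in> borel_measurable M"
    and surv: "\<And>x::nat \<Rightarrow> real. (\<forall>i\<in>{1..n}. x i > 0) \<Longrightarrow>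
        measure M {\<omega> \<in> space M. \<forall>i\<in>{1..n}. X i \<omega> > x i}
          = (\<Prod>j\<in>{1..n+1}. (1 + (\<Sum>i\<in>{1..n}. c i j * x i / \<sigma> i)) powr (- \<gamma> j))"
begin

definition H :: "(nat \<Rightarrow> real) \<Rightarrow> real" where
  "H x = (\<Prod>j\<in>{1..n+1}. (1 + (\<Sum>i\<in>{1..n}. c i j * x i / \<sigma> i)) powr (- \<gamma> j))"

definition E :: "(nat \<Rightarrow> real) \<Rightarrow> 'a set" where
  "E x = {\<omega> \<in> space M. \<forall>i\<in>{1..n}. X i \<omega> > x i}"

lemma E_sets[measurable]: "E x \<in> sets M"
  unfolding E_def using meas
  by (intro sets.sets_Collect_finite_All) (auto simp: measurable_sets_borel)

lemma H_cont:
  assumes "\<And>i. i \<in> {1..n} \<Longrightarrow> x i \<ge> 0" "\<And>i. i \<in> {1..n} \<Longrightarrow> ((\<lambda>m. y m i) \<longlongrightarrow> x i) F"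
  shows "((\<lambda>m. H (y m)) \<longlongrightarrow> H x) F"
  unfolding H_def
proof (intro tendsto_prod tendsto_powr tendsto_add tendsto_sum tendsto_const tendsto_mult tendsto_divide assms)
  fix j assume j: "j \<in> {1..n+1}"
  have "(\<Sum>i\<in>{1..n}. c i j * x i / \<sigma> i) \<ge> 0"
  proof (rule sum_nonneg)
    fix i assume i: "i \<in> {1..n}"
    have "c i j \<ge> 0" using c01[OF i j] by auto
    then show "c i j * x i / \<sigma> i \<ge> 0" using assms(1)[OF i] sigma_pos[OF i] by simp
  qed
  then show "1 + (\<Sum>i\<in>{1..n}. c i j * x i / \<sigma> i) \<noteq> 0" by linarith
qed (use sigma_pos in force)+

lemma E_measure:
  assumes "\<And>i. i \<in> {1..n} \<Longrightarrow> x i \<ge> 0"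
  shows "measure M (E x) = H x"
proof -
  define A where "A m = E (\<lambda>i. x i + inverse (real (Suc m)))" for m
  have inc: "incseq A"
  proof (rule incseq_SucI)
    fix m
    have le: "inverse (real (Suc (Suc m))) \<le> inverse (real (Suc m))" by (simp add: field_simps)
    have *: "x i + inverse (real (Suc (Suc m))) < X i \<omega>" if "x i + inverse (real (Suc m)) < X i \<omega>" for i \<omega>
      using le that by linarith
    show "A m \<subseteq> A (Suc m)" unfolding A_def E_def using * by blast
  qed
  have un: "(\<Union>m. A m) = E x"
  proof (intro equalityI subsetI)
    fix \<omega> assume "\<omega> \<in> (\<Union>m. A m)"
    then obtain m where "\<omega> \<in> A m" by auto
    moreover have "x i < X i \<omega>" if "x i + inverse (real (Suc m)) < X i \<omega>" for i
    proof -
      have "inverse (real (Suc m)) > 0" by simp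
      then show ?thesis using that by linarith
    qed
    ultimately show "\<omega> \<in> E x" unfolding A_def E_def by blast
  next
    fix \<omega> assume w: "\<omega> \<in> E x"
    define d where "d = Min ((\<lambda>i. X i \<omega> - x i) ` {1..n})"
    have dpos: "{1..n} = {} \<or> d > 0" using w unfolding d_def E_def by auto
    obtain m where m: "{1..n} = {} \<or> inverse (real (Suc m)) < d"
      using dpos reals_Archimedean by blast
    have "\<omega> \<in> A m" unfolding A_def E_def
    proof (intro CollectI conjI ballI)
      show "\<omega> \<in> space M" using w by (simp add: E_def)
      fix i assume i: "i \<in> {1..n}"
      then have "d \<le> X i \<omega> - x i" unfolding d_def by (intro Min_le) auto
      then show "x i + inverse (real (Suc m)) < X i \<omega>" using m i by auto
    qed
    then show "\<omega> \<in> (\<Union>m. A m)" by auto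
  qed
  have l1: "(\<lambda>m. measure M (A m)) \<longlonglongrightarrow> measure M (E x)"
    proof -
    have "range A \<subseteq> sets M" by (auto simp: A_def)
    from finite_Lim_measure_incseq[OF this inc] show ?thesis unfolding un .
  qed
  have eq: "measure M (A m) = H (\<lambda>i. x i + inverse (real (Suc m)))" for m
    unfolding A_def E_def H_def
    by (rule surv) (use assms in \<open>auto intro: add_nonneg_pos\<close>)
  have lim0: "(\<lambda>m. x i + inverse (real (Suc m))) \<longlonglongrightarrow> x i" for i
    using tendsto_add[OF tendsto_const LIMSEQ_inverse_real_of_nat, of "x i"] by simp
  have l2: "(\<lambda>m. measure M (A m)) \<longlonglongrightarrow> H x"
    unfolding eq
    by (rule H_cont, rule assms, assumption, rule lim0)
  show ?thesis using LIMSEQ_unique[OF l1 l2] .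
qed

lemma pos_AE: "AE \<omega> in M. \<forall>i\<in>{1..n}. X i \<omega> > 0"
proof -
  have "measure M (E (\<lambda>_. 0)) = H (\<lambda>_. 0)" by (rule E_measure) simp
  also have "H (\<lambda>_. 0) = 1" unfolding H_def by simp
  finally have "AE \<omega> in M. \<omega> \<in> E (\<lambda>_. 0)" by (rule AE_prob_1)
  then show ?thesis by eventually_elim (auto simp: E_def)
qed


lemma atom_zero:
  assumes i: "i \<in> {1..n}"
  shows "measure M {\<omega> \<in> space M. X i \<omega> = t} = 0"
proof (cases "t \<le> 0")
  case True
  have "measure M {\<omega> \<in> space M. X i \<omega> = t} = measure M {}"
  proof (rule measure_eq_AE)
    show "AE \<omega> in M. (\<omega> \<in> {\<omega> \<in> space M. X i \<omega> = t}) = (\<omega> \<in> {})"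
      using pos_AE
    proof eventually_elim
      case (elim \<omega>)
      then have "X i \<omega> > 0" using i by blast
      then show ?case using True by auto
    qed
    show "{\<omega> \<in> space M. X i \<omega> = t} \<in> sets M" using meas[OF i] by measurable
  qed simp
  then show ?thesis by simp
next
  case False
  then have t: "t > 0" by simp
  define e where "e s = (\<lambda>k. if k = i then s else (0::real))" for s
  have Xmeas[measurable]: "X i \<in> borel_measurable M" using meas[OF i] .
  have gt: "measure M {\<omega> \<in> space M. X i \<omega> > t} = H (e t)"
  proof -
    have "measure M {\<omega> \<in> space M. X i \<omega> > t} = measure M (E (e t))"
    proof (rule measure_eq_AE)
      show "AE \<omega> in M. (\<omega> \<in> {\<omega> \<in> space M. X i \<omega> > t}) = (\<omega> \<in> E (e t))"
        using pos_AE by eventually_elim (use i in \<open>auto simp: E_def e_def\<close>)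
    qed auto
    also have "\<dots> = H (e t)" by (rule E_measure) (use t in \<open>auto simp: e_def\<close>)
    finally show ?thesis .
  qed
  define f where "f m = t - t / real (Suc (Suc m))" for m
  have fpos: "f m > 0" for m unfolding f_def using t by (simp add: field_simps add_pos_nonneg)
  have flt: "f m < t" for m unfolding f_def using t by simp
  have fmono: "f m \<le> f (Suc m)" for m unfolding f_def using t by (simp add: field_simps)
  have flim: "f \<longlonglongrightarrow> t"
  proof -
    have "(\<lambda>m. t / real (Suc (Suc m))) \<longlonglongrightarrow> 0"
      using LIMSEQ_Suc[OF LIMSEQ_Suc[OF lim_const_over_n[of t]]] by simp
    from tendsto_diff[OF tendsto_const this, of t] show ?thesis unfolding f_def by simp
  qed
  define B where "B m = E (e (f m))" for m
  have dec: "decseq B"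
  proof (rule decseq_SucI)
    fix m
    have *: "f m < X i \<omega>" if "f (Suc m) < X i \<omega>" for \<omega> using fmono[of m] that by linarith
    show "B (Suc m) \<subseteq> B m" unfolding B_def E_def e_def using * by auto
  qed
  have l1: "(\<lambda>m. measure M (B m)) \<longlonglongrightarrow> measure M (\<Inter>m. B m)"
    by (rule finite_Lim_measure_decseq) (auto simp: B_def[symmetric] dec, simp add: B_def)
  have eqB: "measure M (B m) = H (e (f m))" for m
    unfolding B_def by (rule E_measure) (use fpos in \<open>auto simp: e_def less_imp_le\<close>)
  have l2: "(\<lambda>m. measure M (B m)) \<longlonglongrightarrow> H (e t)"
    unfolding eqB
  proof (rule H_cont)
    fix k show "0 \<le> e t k" using t by (simp add: e_def)
    show "((\<lambda>m. e (f m) k) \<longlongrightarrow> e t k) sequentially"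
      by (cases "k = i") (simp_all add: e_def flim)
  qed
  have ge: "measure M {\<omega> \<in> space M. X i \<omega> \<ge> t} = H (e t)"
  proof -
    have "measure M {\<omega> \<in> space M. X i \<omega> \<ge> t} = measure M (\<Inter>m. B m)"
    proof (rule measure_eq_AE)
      show "AE \<omega> in M. (\<omega> \<in> {\<omega> \<in> space M. X i \<omega> \<ge> t}) = (\<omega> \<in> (\<Inter>m. B m))"
        using pos_AE
      proof eventually_elim
        case (elim \<omega>)
        show ?case
        proof
          assume "\<omega> \<in> {\<omega> \<in> space M. X i \<omega> \<ge> t}"
          then show "\<omega> \<in> (\<Inter>m. B m)" using elim flt
            unfolding B_def E_def e_def by (auto intro: less_le_trans)
        next
          assume a: "\<omega> \<in> (\<Inter>m. B m)"
          then have "\<omega> \<in> space M" by (auto simp: B_def E_def)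
          moreover have "f m < X i \<omega>" for m
          proof -
            have "\<omega> \<in> B m" using a by blast
            then have "e (f m) i < X i \<omega>" using i unfolding B_def E_def by blast
            then show ?thesis by (simp add: e_def)
          qed
          then have "t \<le> X i \<omega>" by (intro LIMSEQ_le_const2[OF flim]) (auto intro: less_imp_le)
          ultimately show "\<omega> \<in> {\<omega> \<in> space M. X i \<omega> \<ge> t}" by auto
        qed
      qed
      show "(\<Inter>m. B m) \<in> sets M" by (auto simp: B_def)
    qed measurable
    then show ?thesis using LIMSEQ_unique[OF l1 l2] by simp
  qed
  have "{\<omega> \<in> space M. X i \<omega> = t} = {\<omega> \<in> space M. X i \<omega> \<ge> t} - {\<omega> \<in> space M. X i \<omega> > t}" by auto
  then have "measure M {\<omega> \<in> space M. X i \<omega> = t} = measure M {\<omega> \<in> space M. X i \<omega> \<ge> t} - measure M {\<omega> \<in> space M. X i \<omega> > t}"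
    by (simp add: finite_measure_Diff[symmetric] subset_iff)
  then show ?thesis using gt ge by simp
qed

definition Y :: "'a \<Rightarrow> real" where "Y \<omega> = Max ((\<lambda>i. X i \<omega>) ` {1..n})"

lemma Y_meas[measurable]: "Y \<in> borel_measurable M"
  unfolding Y_def using meas by (intro borel_measurable_Max) auto

lemma Y_pos_AE:
  assumes n: "n \<ge> 1"
  shows "AE \<omega> in M. Y \<omega> > 0"
  using pos_AE
proof eventually_elim
  case (elim \<omega>)
  have "X 1 \<omega> > 0" using elim n by auto
  also have "X 1 \<omega> \<le> Y \<omega>" unfolding Y_def using n by (intro Max_ge) auto
  finally show ?case .
qed

lemma max_atom:
  assumes n: "n \<ge> 1"
  shows "measure M {\<omega> \<in> space M. Y \<omega> = t} = 0"
proof -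
  have sub: "{\<omega> \<in> space M. Y \<omega> = t} \<subseteq> (\<Union>i\<in>{1..n}. {\<omega> \<in> space M. X i \<omega> = t})"
  proof
    fix \<omega> assume w: "\<omega> \<in> {\<omega> \<in> space M. Y \<omega> = t}"
    have "Y \<omega> \<in> (\<lambda>i. X i \<omega>) ` {1..n}" unfolding Y_def using n by (intro Max_in) auto
    then show "\<omega> \<in> (\<Union>i\<in>{1..n}. {\<omega> \<in> space M. X i \<omega> = t})" using w by auto
  qed
  have ss: "(\<lambda>i. {\<omega> \<in> space M. X i \<omega> = t}) ` {1..n} \<subseteq> sets M"
    using meas by (auto simp: measurable_sets_borel)
  have "measure M {\<omega> \<in> space M. Y \<omega> = t} \<le> measure M (\<Union>i\<in>{1..n}. {\<omega> \<in> space M. X i \<omega> = t})"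
    using ss by (intro finite_measure_mono[OF sub]) auto
  also have "\<dots> \<le> (\<Sum>i\<in>{1..n}. measure M {\<omega> \<in> space M. X i \<omega> = t})"
    by (rule finite_measure_subadditive_finite[OF _ ss]) simp
  also have "\<dots> = 0" by (simp add: atom_zero)
  finally have "measure M {\<omega> \<in> space M. Y \<omega> = t} \<le> 0" .
  with measure_nonneg[of M "{\<omega> \<in> space M. Y \<omega> = t}"] show ?thesis by linarith
qed

definition FY :: "real \<Rightarrow> real" where "FY x = measure M {\<omega> \<in> space M. Y \<omega> \<le> x}"

lemma FY_mono: "x \<le> y \<Longrightarrow> FY x \<le> FY y"
  unfolding FY_def by (rule finite_measure_mono) auto

lemma survival_VaR:
  assumes n: "n \<ge> 1" and q: "0 \<le> q" "q < 1"
  shows "survival M Y (VaR M Y q) = 1 - q"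
proof (cases "q = 0")
  case True
  have "VaR M Y q < ereal (Y \<omega>)" for \<omega>
  proof -
    have "VaR M Y q \<le> ereal (Y \<omega> - 1)" unfolding VaR_def using True
      by (intro Inf_lower) auto
    also have "\<dots> < ereal (Y \<omega>)" by simp
    finally show ?thesis .
  qed
  then have "{\<omega> \<in> space M. VaR M Y q < ereal (Y \<omega>)} = space M" by auto
  then show ?thesis unfolding survival_def using True by (simp add: prob_space)
next
  case False
  then have qpos: "q > 0" using q by simp
  define T where "T = {x::real. measure M {\<omega> \<in> space M. Y \<omega> \<le> x} \<ge> q}"
  have T_FY: "x \<in> T \<longleftrightarrow> FY x \<ge> q" for x by (simp add: T_def FY_def)
  have FY0: "FY x = 0" if "x \<le> 0" for x
  proof -
    have "FY x = measure M {}" unfolding FY_def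
    proof (rule measure_eq_AE)
      show "AE \<omega> in M. (\<omega> \<in> {\<omega> \<in> space M. Y \<omega> \<le> x}) = (\<omega> \<in> {})"
        using Y_pos_AE[OF n] by eventually_elim (use that in auto)
    qed auto
    then show ?thesis by simp
  qed
  have Tpos: "x > 0" if "x \<in> T" for x
    using that FY0[of x] qpos by (force simp: T_FY)
  have bdd: "bdd_below T" using Tpos by (auto intro!: bdd_belowI[of _ 0] less_imp_le)
  have "(\<lambda>m. FY (real m)) \<longlonglongrightarrow> measure M (\<Union>m. {\<omega> \<in> space M. Y \<omega> \<le> real m})"
    unfolding FY_def
    by (rule finite_Lim_measure_incseq) (auto simp: incseq_def intro: order_trans)
  moreover have "(\<Union>m. {\<omega> \<in> space M. Y \<omega> \<le> real m}) = space M"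
    using real_arch_simple by (auto intro: order_trans)
  ultimately have lim1: "(\<lambda>m. FY (real m)) \<longlonglongrightarrow> 1" by (simp add: prob_space)
  obtain m where "FY (real m) > q"
    using eventually_happens'[OF _ order_tendstoD(1)[OF lim1 q(2)]] by auto
  then have "real m \<in> T" unfolding T_FY by simp
  then have Tne: "T \<noteq> {}" by blast
  define t where "t = Inf T"
  have VaR_t: "VaR M Y q = ereal t"
    unfolding VaR_def T_def[symmetric] t_def using ereal_Inf'[OF bdd Tne] by simp
  have ge: "FY t \<ge> q"
  proof -
    have step: "FY (t + inverse (real (Suc m))) \<ge> q" for m
    proof -
      have "t < t + inverse (real (Suc m))" by simp
      then obtain x where "x \<in> T" "x < t + inverse (real (Suc m))"
        unfolding t_def using cInf_lessD[OF Tne] by blast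
      then show ?thesis using FY_mono[of x "t + inverse (real (Suc m))"] unfolding T_FY by linarith
    qed
    have dec: "decseq (\<lambda>m. {\<omega> \<in> space M. Y \<omega> \<le> t + inverse (real (Suc m))})"
    proof (rule decseq_SucI)
      fix m
      have le: "inverse (real (Suc (Suc m))) \<le> inverse (real (Suc m))" by (simp add: field_simps)
      show "{\<omega> \<in> space M. Y \<omega> \<le> t + inverse (real (Suc (Suc m)))} \<subseteq> {\<omega> \<in> space M. Y \<omega> \<le> t + inverse (real (Suc m))}" (is "?A \<subseteq> ?B")
      proof -
        have *: "y \<le> t + inverse (real (Suc m))" if "y \<le> t + inverse (real (Suc (Suc m)))" for y
          using le that by linarith
        show ?thesis using * by blast
      qed
    qed
    have "(\<lambda>m. FY (t + inverse (real (Suc m)))) \<longlonglongrightarrow> measure M (\<Inter>m. {\<omega> \<in> space M. Y \<omega> \<le> t + inverse (real (Suc m))})"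
      unfolding FY_def by (rule finite_Lim_measure_decseq[OF _ dec]) auto
    moreover have "(\<Inter>m. {\<omega> \<in> space M. Y \<omega> \<le> t + inverse (real (Suc m))}) = {\<omega> \<in> space M. Y \<omega> \<le> t}"
    proof (intro equalityI subsetI)
      fix \<omega> assume a: "\<omega> \<in> (\<Inter>m. {\<omega> \<in> space M. Y \<omega> \<le> t + inverse (real (Suc m))})"
      have "(\<lambda>m. t + inverse (real (Suc m))) \<longlonglongrightarrow> t"
        using tendsto_add[OF tendsto_const LIMSEQ_inverse_real_of_nat, of t] by simp
      moreover have "\<forall>m. Y \<omega> \<le> t + inverse (real (Suc m))" using a by auto
      ultimately have "Y \<omega> \<le> t" by (intro LIMSEQ_le_const) auto
      then show "\<omega> \<in> {\<omega> \<in> space M. Y \<omega> \<le> t}" using a by auto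
    next
      fix \<omega> assume a: "\<omega> \<in> {\<omega> \<in> space M. Y \<omega> \<le> t}"
      have "Y \<omega> \<le> t + inverse (real (Suc m))" for m
      proof -
        have "inverse (real (Suc m)) > 0" by simp
        moreover have "Y \<omega> \<le> t" using a by simp
        ultimately show ?thesis by linarith
      qed
      then show "\<omega> \<in> (\<Inter>m. {\<omega> \<in> space M. Y \<omega> \<le> t + inverse (real (Suc m))})"
        using a by blast
    qed
    ultimately have "(\<lambda>m. FY (t + inverse (real (Suc m)))) \<longlonglongrightarrow> FY t" by (simp add: FY_def)
    then show ?thesis using step by (intro LIMSEQ_le_const) auto
  qed
  have le: "measure M {\<omega> \<in> space M. Y \<omega> < t} \<le> q"
  proof -
    have step: "FY (t - inverse (real (Suc m))) \<le> q" for m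
    proof (rule ccontr)
      assume "\<not> ?thesis"
      then have "t - inverse (real (Suc m)) \<in> T" by (simp add: T_FY)
      then have "t \<le> t - inverse (real (Suc m))" unfolding t_def by (rule cInf_lower[OF _ bdd])
      then show False by simp
    qed
    have inc: "incseq (\<lambda>m. {\<omega> \<in> space M. Y \<omega> \<le> t - inverse (real (Suc m))})"
    proof (rule incseq_SucI)
      fix m
      have le: "inverse (real (Suc (Suc m))) \<le> inverse (real (Suc m))" by (simp add: field_simps)
      show "{\<omega> \<in> space M. Y \<omega> \<le> t - inverse (real (Suc m))} \<subseteq> {\<omega> \<in> space M. Y \<omega> \<le> t - inverse (real (Suc (Suc m)))}" (is "?A \<subseteq> ?B")
      proof -
        have *: "y \<le> t - inverse (real (Suc (Suc m)))" if "y \<le> t - inverse (real (Suc m))" for y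
          using le that by linarith
        show ?thesis using * by blast
      qed
    qed
    have "(\<lambda>m. FY (t - inverse (real (Suc m)))) \<longlonglongrightarrow> measure M (\<Union>m. {\<omega> \<in> space M. Y \<omega> \<le> t - inverse (real (Suc m))})"
      unfolding FY_def by (rule finite_Lim_measure_incseq[OF _ inc]) auto
    moreover have "(\<Union>m. {\<omega> \<in> space M. Y \<omega> \<le> t - inverse (real (Suc m))}) = {\<omega> \<in> space M. Y \<omega> < t}"
    proof (intro equalityI subsetI)
      fix \<omega> assume "\<omega> \<in> (\<Union>m. {\<omega> \<in> space M. Y \<omega> \<le> t - inverse (real (Suc m))})"
      then obtain m where "\<omega> \<in> space M" and y: "Y \<omega> \<le> t - inverse (real (Suc m))" by auto
      moreover have "inverse (real (Suc m)) > 0" by simp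
      then have "Y \<omega> < t" using y by linarith
      ultimately show "\<omega> \<in> {\<omega> \<in> space M. Y \<omega> < t}" by auto
    next
      fix \<omega> assume a: "\<omega> \<in> {\<omega> \<in> space M. Y \<omega> < t}"
      then obtain m where m: "inverse (real (Suc m)) < t - Y \<omega>"
        using reals_Archimedean[of "t - Y \<omega>"] by auto
      then have "Y \<omega> \<le> t - inverse (real (Suc m))" by linarith
      then show "\<omega> \<in> (\<Union>m. {\<omega> \<in> space M. Y \<omega> \<le> t - inverse (real (Suc m))})" using a by blast
    qed
    ultimately have "(\<lambda>m. FY (t - inverse (real (Suc m)))) \<longlonglongrightarrow> measure M {\<omega> \<in> space M. Y \<omega> < t}" by simp
    then show ?thesis using step by (intro LIMSEQ_le_const2) auto
  qed
  have "{\<omega> \<in> space M. Y \<omega> \<le> t} - {\<omega> \<in> space M. Y \<omega> < t} = {\<omega> \<in> space M. Y \<omega> = t}" by auto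
  moreover have "measure M ({\<omega> \<in> space M. Y \<omega> \<le> t} - {\<omega> \<in> space M. Y \<omega> < t})
      = FY t - measure M {\<omega> \<in> space M. Y \<omega> < t}"
    unfolding FY_def by (rule finite_measure_Diff) auto
  ultimately have "FY t - measure M {\<omega> \<in> space M. Y \<omega> < t} = 0"
    using max_atom[OF n, of t] by simp
  with ge le have Ft: "FY t = q" by simp
  have "space M - {\<omega> \<in> space M. Y \<omega> \<le> t} = {\<omega> \<in> space M. ereal t < ereal (Y \<omega>)}" by auto
  then have "survival M Y (ereal t) = 1 - FY t"
    unfolding survival_def FY_def using finite_measure_compl[of "{\<omega> \<in> space M. Y \<omega> \<le> t}"]
    by (simp add: prob_space)
  then show ?thesis using VaR_t Ft by simp
qed

lemma tc_mult:
  assumes W[measurable]: "W \<in> borel_measurable M"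
  shows "tail_cond_exp M W v * survival M W v = (LINT \<omega>:{\<omega> \<in> space M. v < ereal (W \<omega>)}|M. W \<omega>)"
proof (cases "survival M W v = 0")
  case True
  let ?A = "{\<omega> \<in> space M. v < ereal (W \<omega>)}"
  have As: "?A \<in> sets M" by measurable
  have "?A \<in> null_sets M"
    using True As by (intro null_setsI) (simp_all add: emeasure_eq_measure survival_def)
  then have "AE \<omega> in M. \<omega> \<notin> ?A" by (rule AE_not_in)
  then have "AE \<omega> in M. indicator ?A \<omega> *\<^sub>R W \<omega> = 0" by eventually_elim simp
  then have "(LINT \<omega>:?A|M. W \<omega>) = integral\<^sup>L M (\<lambda>_. 0::real)"
    unfolding set_lebesgue_integral_def using As by (intro integral_cong_AE) auto
  then show ?thesis using True by simp
next
  case False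
  then show ?thesis unfolding tail_cond_exp_def by simp
qed

definition Z :: "nat set \<Rightarrow> 'a \<Rightarrow> real" where "Z S \<omega> = Min ((\<lambda>s. X s \<omega>) ` S)"

lemma Z_meas[measurable]: "S \<subseteq> {1..n} \<Longrightarrow> Z S \<in> borel_measurable M"
  unfolding Z_def using meas by (intro borel_measurable_Min) (auto intro: finite_subset)

lemma main:
  assumes n: "n \<ge> 1" and q: "0 \<le> q" "q < 1"
    and fin: "set_integrable M {\<omega> \<in> space M. VaR M Y q < ereal (Y \<omega>)} Y"
  shows "CTE M Y q = 1 / (1 - q) *
      (\<Sum>S\<in>{S. S \<subseteq> {1..n} \<and> S \<noteq> {}}.
         (-1) ^ (card S - 1) * tail_cond_exp M (Z S) (VaR M Y q) * survival M (Z S) (VaR M Y q))"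
proof -
  define v where "v = VaR M Y q"
  define \<S> where "\<S> = {S. S \<subseteq> {1..n} \<and> S \<noteq> {}}"
  have finS: "finite \<S>" unfolding \<S>_def by simp
  define g where "g x = (if v < ereal (max x 0) then max x 0 else 0)" for x :: real
  have gmono: "mono g"
  proof (rule monoI)
    fix x y :: real assume xy: "x \<le> y"
    then have m: "max x 0 \<le> max y 0" by simp
    show "g x \<le> g y"
    proof (cases "v < ereal (max x 0)")
      case True
      then have "v < ereal (max y 0)" using m by (meson ereal_less_eq(3) less_le_trans)
      then show ?thesis using True m by (simp add: g_def)
    next
      case False
      then show ?thesis by (simp add: g_def)
    qed
  qed
  have gpos: "g x = indicator {y. v < ereal y} x * x" if "x > 0" for x
    using that by (simp add: g_def indicator_def)
  define f where "f S \<omega> = indicator {\<omega> \<in> space M. v < ereal (Z S \<omega>)} \<omega> *\<^sub>R Z S \<omega>" for S \<omega>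
  define fY where "fY \<omega> = indicator {\<omega> \<in> space M. v < ereal (Y \<omega>)} \<omega> *\<^sub>R Y \<omega>" for \<omega>
  have intY: "integrable M fY" using fin unfolding set_integrable_def fY_def v_def .
  have fmeas[measurable]: "f S \<in> borel_measurable M" if "S \<in> \<S>" for S
  proof -
    have [measurable]: "Z S \<in> borel_measurable M" using that unfolding \<S>_def by (intro Z_meas) auto
    show ?thesis unfolding f_def by measurable
  qed
  have fYmeas[measurable]: "fY \<in> borel_measurable M" unfolding fY_def by measurable
  have ZleY: "Z S \<omega> \<le> Y \<omega>" "Z S \<omega> > 0" if "S \<in> \<S>" "\<forall>i\<in>{1..n}. X i \<omega> > 0" for S \<omega>
  proof -
    have fS: "finite S" "S \<noteq> {}" "S \<subseteq> {1..n}" using that(1) finite_subset unfolding \<S>_def by auto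
    have "Z S \<omega> \<in> (\<lambda>s. X s \<omega>) ` S" unfolding Z_def using fS by (intro Min_in) auto
    then obtain s where s: "s \<in> S" "Z S \<omega> = X s \<omega>" by auto
    then show "Z S \<omega> \<le> Y \<omega>" unfolding Y_def using fS by (intro Max_ge) auto
    show "Z S \<omega> > 0" using s fS that(2) by auto
  qed
  have intf: "integrable M (f S)" if S: "S \<in> \<S>" for S
  proof (rule Bochner_Integration.integrable_bound[OF intY fmeas[OF S]])
    show "AE \<omega> in M. norm (f S \<omega>) \<le> norm (fY \<omega>)"
      using pos_AE
    proof eventually_elim
      case (elim \<omega>)
      note z = ZleY[OF S elim]
      show ?case
      proof (cases "\<omega> \<in> space M \<and> v < ereal (Z S \<omega>)")
        case True
        then have "v < ereal (Y \<omega>)" using z(1) by (meson ereal_less_eq(3) less_le_trans)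
        then show ?thesis using True z unfolding f_def fY_def by (simp add: indicator_def)
      next
        case False
        then show ?thesis unfolding f_def fY_def by (auto simp: indicator_def)
      qed
    qed
  qed
  have pointwise: "AE \<omega> in M. fY \<omega> = (\<Sum>S\<in>\<S>. (-1) ^ (card S - 1) * f S \<omega>)"
    using pos_AE AE_space
  proof eventually_elim
    case (elim \<omega>)
    define b where "b i = g (X i \<omega>)" for i
    have gY: "g (Y \<omega>) = Max (b ` {1..n})" unfolding Y_def b_def
      using mono_Max_commute[OF gmono, of "(\<lambda>i. X i \<omega>) ` {1..n}"] n by (simp add: image_image)
    have gZ: "g (Z S \<omega>) = Min (b ` S)" if "S \<in> \<S>" for S
    proof -
      have "finite S" "S \<noteq> {}" using that finite_subset unfolding \<S>_def by auto
      then show ?thesis unfolding Z_def b_def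
        using mono_Min_commute[OF gmono, of "(\<lambda>i. X i \<omega>) ` S"] by (simp add: image_image)
    qed
    have Ypos: "Y \<omega> > 0"
    proof -
      have "{1} \<in> \<S>" unfolding \<S>_def using n by auto
      from ZleY[OF this elim(1)] show ?thesis by linarith
    qed
    have "fY \<omega> = g (Y \<omega>)" unfolding fY_def using gpos[OF Ypos] elim(2) by (simp add: indicator_def)
    also have "\<dots> = (\<Sum>S\<in>\<S>. (-1) ^ (card S - 1) * Min (b ` S))"
      unfolding gY \<S>_def by (rule max_min_ie) (use n in auto)
    also have "\<dots> = (\<Sum>S\<in>\<S>. (-1) ^ (card S - 1) * f S \<omega>)"
    proof (rule sum.cong[OF refl])
      fix S assume S: "S \<in> \<S>"
      have "f S \<omega> = g (Z S \<omega>)" unfolding f_def using gpos[OF ZleY(2)[OF S elim(1)]] elim(2)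
        by (simp add: indicator_def)
      then show "(-1) ^ (card S - 1) * Min (b ` S) = (-1) ^ (card S - 1) * f S \<omega>" using gZ[OF S] by simp
    qed
    finally show ?case .
  qed
  have "(LINT \<omega>:{\<omega> \<in> space M. v < ereal (Y \<omega>)}|M. Y \<omega>) = integral\<^sup>L M fY"
    unfolding set_lebesgue_integral_def fY_def ..
  also have "\<dots> = integral\<^sup>L M (\<lambda>\<omega>. \<Sum>S\<in>\<S>. (-1) ^ (card S - 1) * f S \<omega>)"
    by (rule integral_cong_AE[OF _ _ pointwise]) auto
  also have "\<dots> = (\<Sum>S\<in>\<S>. (-1) ^ (card S - 1) * integral\<^sup>L M (f S))"
  proof -
    have "integral\<^sup>L M (\<lambda>\<omega>. \<Sum>S\<in>\<S>. (-1) ^ (card S - 1) * f S \<omega>) = (\<Sum>S\<in>\<S>. integral\<^sup>L M (\<lambda>\<omega>. (-1) ^ (card S - 1) * f S \<omega>))"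
      by (rule Bochner_Integration.integral_sum) (auto intro: intf)
    also have "\<dots> = (\<Sum>S\<in>\<S>. (-1) ^ (card S - 1) * integral\<^sup>L M (f S))"
      by (rule sum.cong[OF refl], rule Bochner_Integration.integral_mult_right) (auto intro: intf)
    finally show ?thesis .
  qed
  also have "\<dots> = (\<Sum>S\<in>\<S>. (-1) ^ (card S - 1) * tail_cond_exp M (Z S) v * survival M (Z S) v)"
  proof (rule sum.cong[OF refl])
    fix S assume S: "S \<in> \<S>"
    have "Z S \<in> borel_measurable M" using S unfolding \<S>_def by simp
    from tc_mult[OF this, of v] show "(-1) ^ (card S - 1) * integral\<^sup>L M (f S)
        = (-1) ^ (card S - 1) * tail_cond_exp M (Z S) v * survival M (Z S) v"
      unfolding f_def set_lebesgue_integral_def by simp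
  qed
  finally have key: "(LINT \<omega>:{\<omega> \<in> space M. v < ereal (Y \<omega>)}|M. Y \<omega>)
      = (\<Sum>S\<in>\<S>. (-1) ^ (card S - 1) * tail_cond_exp M (Z S) v * survival M (Z S) v)" .
  have sv: "survival M Y v = 1 - q" unfolding v_def by (rule survival_VaR[OF n q])
  have c: "CTE M Y q = (LINT \<omega>:{\<omega> \<in> space M. v < ereal (Y \<omega>)}|M. Y \<omega>) / (1 - q)"
    unfolding CTE_def v_def[symmetric] tail_cond_exp_def sv ..
  show ?thesis
    unfolding c key v_def[symmetric] \<S>_def[symmetric] by simp
qed

end
theorem proposition4p3:
  fixes M :: "'a measure" and n :: nat
    and c :: "nat \<Rightarrow> nat \<Rightarrow> real"
    and \<sigma> :: "nat \<Rightarrow> real" and \<gamma> :: "nat \<Rightarrow> real"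
    and X :: "nat \<Rightarrow> 'a \<Rightarrow> real" and q :: real
  assumes "prob_space M"
    and "n \<ge> 1"
    and c01: "\<And>i j. i \<in> {1..n} \<Longrightarrow> j \<in> {1..n+1} \<Longrightarrow> c i j \<in> {0, 1}"
    and sigma_pos: "\<And>i. i \<in> {1..n} \<Longrightarrow> \<sigma> i > 0"
    and gamma_pos: "\<And>j. j \<in> {1..n+1} \<Longrightarrow> \<gamma> j > 0"
    and row_pos: "\<And>i. i \<in> {1..n} \<Longrightarrow> (\<Sum>j\<in>{1..n+1}. c i j * \<gamma> j) > 0"
    and meas: "\<And>i. i \<in> {1..n} \<Longrightarrow> X i \<in> borel_measurable M"
    and surv: "\<And>x::nat \<Rightarrow> real. (\<forall>i\<in>{1..n}. x i > 0) \<Longrightarrow>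
        measure M {\<omega> \<in> space M. \<forall>i\<in>{1..n}. X i \<omega> > x i}
          = (\<Prod>j\<in>{1..n+1}. (1 + (\<Sum>i\<in>{1..n}. c i j * x i / \<sigma> i)) powr (- \<gamma> j))"
    and q: "0 \<le> q" "q < 1"
    and finite_CTE: "set_integrable M
        {\<omega> \<in> space M. VaR M (\<lambda>\<omega>. Max ((\<lambda>i. X i \<omega>) ` {1..n})) q
                        < ereal (Max ((\<lambda>i. X i \<omega>) ` {1..n}))}
        (\<lambda>\<omega>. Max ((\<lambda>i. X i \<omega>) ` {1..n}))"
  shows "CTE M (\<lambda>\<omega>. Max ((\<lambda>i. X i \<omega>) ` {1..n})) q
    = 1 / (1 - q) *
      (\<Sum>S\<in>{S. S \<subseteq> {1..n} \<and> S \<noteq> {}}.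
         (-1) ^ (card S - 1)
         * tail_cond_exp M (\<lambda>\<omega>. Min ((\<lambda>s. X s \<omega>) ` S))
              (VaR M (\<lambda>\<omega>. Max ((\<lambda>i. X i \<omega>) ` {1..n})) q)
         * survival M (\<lambda>\<omega>. Min ((\<lambda>s. X s \<omega>) ` S))
              (VaR M (\<lambda>\<omega>. Max ((\<lambda>i. X i \<omega>) ` {1..n})) q))"
  proof -
  interpret pp M n c \<sigma> \<gamma> X
    by (rule pp.intro[OF assms(1)], unfold_locales) (use c01 sigma_pos meas surv in auto)
  show ?thesis
    using main[OF \<open>n \<ge> 1\<close> q(1) q(2)] finite_CTE unfolding Y_def Z_def by simp
qed

end
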